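(* Let $X_1,\dots,X_n$ be i.i.d. standard Gaussian random variables ($\mathbb{E}[X_i]=0$, $\mathbb{E}[X_i^2]=1$), let $S_k=\sum_{i=1}^kX_i$ and $S_n^*=\max_{1\le i\le n}|S_i|$. Then for any $\ell>0$, \[\Pr[S_n^*<4\sqrt{\ell}]\ge 4^{-n/\ell}.\] *)

theory Defs
  imports "HOL-Probability.Probability"
begin

end

theory Submission
  imports Defs
begin

lemma cos_sin_std_normal:
  fixes th :: real
  shows "integrable std_normal_distribution (\<lambda>t. cos (th * t))"
    and "integrable std_normal_distribution (\<lambda>t. sin (th * t))"
    and "(\<integral>t. cos (th * t) \<partial>std_normal_distribution) = exp (- (th^2) / 2)"
    and "(\<integral>t. sin (th * t) \<partial>std_normal_distribution) = 0"
proof -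
  interpret real_distribution std_normal_distribution by (rule real_dist_normal_dist)
  have int: "integrable std_normal_distribution (\<lambda>x. iexp (th * x))"
    by (rule integrable_iexp) auto
  have c: "char std_normal_distribution th = (CLINT x|std_normal_distribution. iexp (th * x))"
    by (simp add: char_def)
  have e: "\<And>x. iexp (th * x) = complex_of_real (cos (th*x)) + \<i> * complex_of_real (sin (th*x))"
    by (simp add: complex_eq_iff Re_exp Im_exp)
  have re: "(\<lambda>x. Re (iexp (th * x))) = (\<lambda>x. cos (th*x))" and im: "(\<lambda>x. Im (iexp (th * x))) = (\<lambda>x. sin (th*x))"
    by (simp_all add: Re_exp Im_exp)
  show "integrable std_normal_distribution (\<lambda>t. cos (th * t))"
    using integrable_Re[OF int] unfolding re .
  show "integrable std_normal_distribution (\<lambda>t. sin (th * t))"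
    using integrable_Im[OF int] unfolding im .
  have "Re (char std_normal_distribution th) = (\<integral>t. cos (th * t) \<partial>std_normal_distribution)"
    unfolding c integral_Re[OF int, symmetric] re ..
  then show "(\<integral>t. cos (th * t) \<partial>std_normal_distribution) = exp (- (th^2) / 2)"
    by (simp add: char_std_normal_distribution)
  have "Im (char std_normal_distribution th) = (\<integral>t. sin (th * t) \<partial>std_normal_distribution)"
    unfolding c integral_Im[OF int, symmetric] im ..
  then show "(\<integral>t. sin (th * t) \<partial>std_normal_distribution) = 0"
    by (simp add: char_std_normal_distribution)
qed

lemma cos_nonpos_band:
  fixes x :: real
  assumes "pi/2 \<le> \<bar>x\<bar>" "\<bar>x\<bar> \<le> 3*pi/2"
  shows "cos x \<le> 0"
proof -
  have h1: "cos x = cos \<bar>x\<bar>" by (cases "x \<ge> 0") auto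
  have h2: "cos \<bar>x\<bar> = - cos (pi - \<bar>x\<bar>)" by (simp add: cos_diff)
  have h3: "cos (pi - \<bar>x\<bar>) \<ge> 0" by (rule cos_ge_zero) (use assms in auto)
  show ?thesis using h1 h2 h3 by linarith
qed

lemma g_pointwise:
  fixes b y t :: real
  assumes b: "b > 0" and y: "\<bar>y\<bar> < b"
  shows "(if \<bar>y+t\<bar> < b then cos (pi/(2*b) * (y+t)) else 0) \<ge> cos (pi/(2*b) * (y+t)) - t^4/(16*b^4)"
proof (cases "\<bar>y+t\<bar> < b")
  case True
  then show ?thesis by simp
next
  case False
  show ?thesis
  proof (cases "\<bar>y+t\<bar> \<le> 3*b")
    case True
    have "cos (pi/(2*b) * (y+t)) \<le> 0"
    proof (rule cos_nonpos_band)
      have e: "\<bar>pi/(2*b) * (y+t)\<bar> = pi/(2*b) * \<bar>y+t\<bar>" using b by (simp add: abs_mult)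
      have "pi/(2*b) * b \<le> pi/(2*b) * \<bar>y+t\<bar>" using False b by (intro mult_left_mono) auto
      then show "pi/2 \<le> \<bar>pi/(2*b) * (y+t)\<bar>" using b e by simp
      have "pi/(2*b) * \<bar>y+t\<bar> \<le> pi/(2*b) * (3*b)" using True b by (intro mult_left_mono) auto
      then show "\<bar>pi/(2*b) * (y+t)\<bar> \<le> 3*pi/2" using b e by simp
    qed
    moreover have "t^4/(16*b^4) \<ge> 0" using b by simp
    ultimately have "cos (pi/(2*b) * (y+t)) - t^4/(16*b^4) \<le> 0" by linarith
    then show ?thesis using False by simp
  next
    case False2: False
    have "\<bar>t\<bar> \<ge> 2*b" using False2 y by linarith
    then have "(2*b)^4 \<le> \<bar>t\<bar>^4" by (rule power_mono) (use b in auto)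
    then have "16*b^4 \<le> t^4" by (simp add: power_mult_distrib power_even_abs_numeral)
    then have "t^4/(16*b^4) \<ge> 1" using b by simp
    then have "cos (pi/(2*b) * (y+t)) - t^4/(16*b^4) \<le> 0" using cos_le_one[of "pi/(2*b) * (y+t)"] by linarith
    then show ?thesis using False by simp
  qed
qed

lemma G1:
  fixes b y :: real
  defines "th \<equiv> pi/(2*b)"
  assumes b: "b > 0" and y: "\<bar>y\<bar> < b"
  shows "integrable std_normal_distribution (\<lambda>t. if \<bar>y+t\<bar> < b then cos (th * (y+t)) else 0)"
    and "(\<integral>t. (if \<bar>y+t\<bar> < b then cos (th * (y+t)) else 0) \<partial>std_normal_distribution)
          \<ge> exp (- (th^2)/2) * cos (th * y) - 3/(16*b^4)"
proof -
  interpret real_distribution std_normal_distribution by (rule real_dist_normal_dist)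
  note cs = cos_sin_std_normal[of th]
  have m4: "integrable std_normal_distribution (\<lambda>t. t^4)"
       "(\<integral>t. t^4 \<partial>std_normal_distribution) = 3"
    using std_normal_distribution_even_moments[of 2] by (simp_all add: fact_numeral)
  show int: "integrable std_normal_distribution (\<lambda>t. if \<bar>y+t\<bar> < b then cos (th * (y+t)) else 0)"
    by (intro integrable_const_bound[where B=1]) auto
  have eq: "\<And>t. cos (th * (y+t)) - t^4/(16*b^4) = cos (th*y) * cos (th*t) - sin (th*y) * sin (th*t) - t^4/(16*b^4)"
    by (simp add: distrib_left cos_add)
  have int2: "integrable std_normal_distribution (\<lambda>t. cos (th*y) * cos (th*t) - sin (th*y) * sin (th*t) - t^4/(16*b^4))"
    using cs m4 by auto
  have "(\<integral>t. cos (th*y) * cos (th*t) - sin (th*y) * sin (th*t) - t^4/(16*b^4) \<partial>std_normal_distribution)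
        = cos (th*y) * exp (- (th^2)/2) - 3/(16*b^4)"
    using cs m4 by (simp add: integral_diff)
  moreover have "(\<integral>t. cos (th*y) * cos (th*t) - sin (th*y) * sin (th*t) - t^4/(16*b^4) \<partial>std_normal_distribution)
       \<le> (\<integral>t. (if \<bar>y+t\<bar> < b then cos (th * (y+t)) else 0) \<partial>std_normal_distribution)"
    using g_pointwise[OF b y] int2 int unfolding th_def[symmetric] eq by (intro integral_mono) auto
  ultimately show "(\<integral>t. (if \<bar>y+t\<bar> < b then cos (th * (y+t)) else 0) \<partial>std_normal_distribution)
          \<ge> exp (- (th^2)/2) * cos (th * y) - 3/(16*b^4)" by (simp add: mult.commute)
qed

lemma sin_ge_half:
  fixes x :: real assumes "0 \<le> x" "x \<le> 1" shows "sin x \<ge> x/2"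
proof -
  have "\<bar>sin x - (\<Sum>m<3. sin_coeff m * x ^ m)\<bar> \<le> inverse (fact 3) * \<bar>x\<bar> ^ 3"
    by (rule Maclaurin_sin_bound)
  moreover have "(\<Sum>m<3. sin_coeff m * x ^ m) = x"
    by (simp add: sin_coeff_def numeral_3_eq_3)
  ultimately have "\<bar>sin x - x\<bar> * 6 \<le> x ^ 3" using assms by (simp add: fact_numeral)
  moreover have "x - sin x \<le> \<bar>sin x - x\<bar>" by linarith
  ultimately have "(x - sin x) * 6 \<le> x^3" 
    by (meson order_trans mult_right_mono zero_le_numeral)
  then have "x - sin x \<le> x^3/6" by (simp add: field_simps)
  then have "sin x \<ge> x - x^3/6" by linarith
  moreover have "x^3 \<le> x"
  proof -
    have "x^3 = x * x^2" by (simp add: power3_eq_cube power2_eq_square)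
    also have "\<dots> \<le> x * 1" using assms by (intro mult_left_mono) (auto simp: power_le_one)
    finally show ?thesis by simp
  qed
  ultimately show ?thesis using assms by linarith
qed

lemma trig_window:
  fixes b y w :: real
  defines "th \<equiv> pi/(2*b)"
  assumes b: "b > 0" and y: "0 \<le> y" "y \<le> b" and w: "0 < w" "w \<le> b"
  shows "sin (th*y) - sin (th*(y-w)) \<ge> th^2*w^2/8"
proof -
  have th: "th > 0" using b by (simp add: th_def)
  have thb: "th * b = pi/2" using b by (simp add: th_def)
  have "sin (th*y) - sin (th*(y-w)) = 2 * sin ((th*y - th*(y-w))/2) * cos ((th*y + th*(y-w))/2)"
    by (rule sin_diff_sin)
  moreover have "(th*y - th*(y-w))/2 = th*w/2" "(th*y + th*(y-w))/2 = th*(y - w/2)"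
    by (simp_all add: field_simps)
  ultimately have "sin (th*y) - sin (th*(y-w)) = 2 * sin (th*w/2) * cos (th*(y - w/2))"
    by simp
  moreover have "cos (th*(y - w/2)) \<ge> cos (th*(b - w/2))"
  proof -
    have "cos (th*(y - w/2)) = cos \<bar>th*(y - w/2)\<bar>" by (cases "th*(y - w/2) \<ge> 0") auto
    moreover have "\<bar>th*(y - w/2)\<bar> \<le> th*(b - w/2)"
      using th y w by (auto simp: abs_mult abs_le_iff intro!: mult_left_mono)
    moreover have "th*(b - w/2) \<le> pi"
    proof -
      have "th*(b - w/2) \<le> th * b" using th w by (intro mult_left_mono) auto
      then show ?thesis using thb pi_gt_zero by linarith
    qed
    moreover have "th*(b - w/2) \<ge> 0" using th w by simp
    ultimately show ?thesis
      using cos_mono_le_eq[of "th*(b - w/2)" "\<bar>th*(y - w/2)\<bar>"] by simp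
  qed
  moreover have "cos (th*(b - w/2)) = sin (th*w/2)"
  proof -
    have "cos (th*b) = 0" "sin (th*b) = 1" unfolding thb by simp_all
    then show ?thesis by (simp add: right_diff_distrib cos_diff)
  qed
  moreover have sx: "sin (th*w/2) \<ge> th*w/4"
  proof -
    have "th * w \<le> pi/2" using thb th w by (metis mult_left_mono less_imp_le)
    then have "th*w/2 \<le> 1" using pi_less_4 by linarith
    then have "sin (th*w/2) \<ge> (th*w/2)/2" using th w by (intro sin_ge_half) auto
    then show ?thesis by simp
  qed
  moreover have "0 \<le> th*w/4" using th w by simp
  ultimately have "sin (th*y) - sin (th*(y-w)) \<ge> 2 * (th*w/4) * (th*w/4)"
    by (smt (verit, best) mult_left_mono mult_mono)
  moreover have "th^2*w^2/8 = 2 * (th*w/4) * (th*w/4)" by (simp add: power2_eq_square)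
  ultimately show ?thesis by linarith
qed

lemma std_normal_density_mono:
  assumes "\<bar>t\<bar> \<le> w" shows "std_normal_density w \<le> std_normal_density t"
proof -
  have "\<bar>t\<bar>^2 \<le> w^2" by (rule power_mono) (use assms in auto)
  then have "t^2 \<le> w^2" by simp
  then have "exp (- (w\<^sup>2 / 2)) \<le> exp (- (t\<^sup>2 / 2))" by simp
  then show ?thesis by (simp add: std_normal_density_def divide_right_mono)
qed

lemma G2:
  fixes b y w :: real
  defines "th \<equiv> pi/(2*b)"
  assumes b: "b > 0" and y: "\<bar>y\<bar> < b" and w: "0 < w" "w \<le> b"
  shows "(\<integral>\<^sup>+t. ennreal (if \<bar>y+t\<bar> < b then cos (th * (y+t)) else 0) \<partial>std_normal_distribution)
         \<ge> ennreal (std_normal_density w * (th * w^2 / 8))"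
proof -
  have th: "th > 0" using b by (simp add: th_def)
  have thb: "th * b = pi/2" using b by (simp add: th_def)
  let ?g = "\<lambda>t. ennreal (if \<bar>y+t\<bar> < b then cos (th * (y+t)) else 0)"
  have gm[measurable]: "?g \<in> borel_measurable borel" by measurable
  have cosle: "cos (th * z) \<le> (if \<bar>z\<bar> < b then cos (th * z) else 0)" if "\<bar>z\<bar> \<le> b" for z
  proof (cases "\<bar>z\<bar> < b")
    case False
    then have "z = b \<or> z = -b" using that by auto
    moreover have "cos (th * b) = 0" unfolding thb by simp
    ultimately have "cos (th * z) = 0" by auto
    then show ?thesis by simp
  qed simp
  have cosnn: "cos (th * z) \<ge> 0" if "\<bar>z\<bar> \<le> b" for z
  proof (rule cos_ge_zero)
    have "\<bar>th * z\<bar> \<le> th * b" using that th by (simp add: abs_mult mult_left_mono)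
    then show "- (pi/2) \<le> th * z" "th * z \<le> pi/2" using thb by (simp_all add: abs_le_iff)
  qed
  have dens: "(\<integral>\<^sup>+t. ?g t \<partial>std_normal_distribution) = (\<integral>\<^sup>+t. ennreal (std_normal_density t) * ?g t \<partial>lborel)"
    by (rule nn_integral_density) auto
  define F where "F = (\<lambda>t. std_normal_density w * sin (th * (y + t)) / th)"
  have Fd: "DERIV F t :> std_normal_density w * cos (th * (y + t))" for t
    unfolding F_def using th
    by (auto intro!: derivative_eq_intros)
  have wint: "(\<integral>\<^sup>+t. ennreal (std_normal_density t) * ?g t \<partial>lborel) \<ge> ennreal (std_normal_density w * (th * w^2 / 8))"
  proof (cases "y \<ge> 0")
    case True
    have "(\<integral>\<^sup>+t. ennreal (std_normal_density w * cos (th * (y + t))) * indicator {-w..0} t \<partial>lborel)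
          \<le> (\<integral>\<^sup>+t. ennreal (std_normal_density t) * ?g t \<partial>lborel)"
    proof (intro nn_integral_mono)
      fix t
      show "ennreal (std_normal_density w * cos (th * (y + t))) * indicator {-w..0} t
          \<le> ennreal (std_normal_density t) * ?g t"
      proof (cases "t \<in> {-w..0}")
        case True
        then have z: "\<bar>y+t\<bar> \<le> b" using y w \<open>y \<ge> 0\<close> by auto
        have "std_normal_density w * cos (th * (y + t)) \<le> std_normal_density t * (if \<bar>y+t\<bar> < b then cos (th * (y+t)) else 0)"
          using std_normal_density_mono[of t w] True cosle[OF z] cosnn[OF z] normal_density_nonneg[of 0 1 t]
          by (intro mult_mono) auto
        then show ?thesis using True by (simp add: ennreal_mult'[symmetric] ennreal_leI)
      qed simp
    qed
    also have "(\<integral>\<^sup>+t. ennreal (std_normal_density w * cos (th * (y + t))) * indicator {-w..0} t \<partial>lborel) = F 0 - F (-w)"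
      using w y True by (intro nn_integral_FTC_Icc Fd) (auto intro!: mult_nonneg_nonneg cosnn normal_density_nonneg simp: abs_le_iff)
    finally have "ennreal (F 0 - F (-w)) \<le> (\<integral>\<^sup>+t. ennreal (std_normal_density t) * ?g t \<partial>lborel)" .
    moreover have "F 0 - F (-w) \<ge> std_normal_density w * (th * w^2 / 8)"
    proof -
      have "F 0 - F (-w) = std_normal_density w * ((sin (th*y) - sin (th*(y-w))) / th)"
        unfolding F_def by (simp add: diff_divide_distrib right_diff_distrib)
      moreover have "(sin (th*y) - sin (th*(y-w))) / th \<ge> th * w^2 / 8"
        using trig_window[OF b True _ w] y th unfolding th_def[symmetric]
        by (simp add: field_simps power2_eq_square)
      ultimately show ?thesis using mult_left_mono[OF _ normal_density_nonneg, of "th * w^2 / 8" "(sin (th*y) - sin (th*(y-w))) / th" 0 1 w] by simp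
    qed
    ultimately show ?thesis by (meson ennreal_leI order_trans)
  next
    case False
    have "(\<integral>\<^sup>+t. ennreal (std_normal_density w * cos (th * (y + t))) * indicator {0..w} t \<partial>lborel)
          \<le> (\<integral>\<^sup>+t. ennreal (std_normal_density t) * ?g t \<partial>lborel)"
    proof (intro nn_integral_mono)
      fix t
      show "ennreal (std_normal_density w * cos (th * (y + t))) * indicator {0..w} t
          \<le> ennreal (std_normal_density t) * ?g t"
      proof (cases "t \<in> {0..w}")
        case True
        then have z: "\<bar>y+t\<bar> \<le> b" using y w False by auto
        have "std_normal_density w * cos (th * (y + t)) \<le> std_normal_density t * (if \<bar>y+t\<bar> < b then cos (th * (y+t)) else 0)"
          using std_normal_density_mono[of t w] True cosle[OF z] cosnn[OF z] normal_density_nonneg[of 0 1 t]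
          by (intro mult_mono) auto
        then show ?thesis using True by (simp add: ennreal_mult'[symmetric] ennreal_leI)
      qed simp
    qed
    also have "(\<integral>\<^sup>+t. ennreal (std_normal_density w * cos (th * (y + t))) * indicator {0..w} t \<partial>lborel) = F w - F 0"
      using w y False by (intro nn_integral_FTC_Icc Fd) (auto intro!: mult_nonneg_nonneg cosnn normal_density_nonneg simp: abs_le_iff)
    finally have "ennreal (F w - F 0) \<le> (\<integral>\<^sup>+t. ennreal (std_normal_density t) * ?g t \<partial>lborel)" .
    moreover have "F w - F 0 \<ge> std_normal_density w * (th * w^2 / 8)"
    proof -
      have "F w - F 0 = std_normal_density w * ((sin (th*(-y)) - sin (th*(-y-w))) / th)"
        proof -
          have "th*(-y-w) = -(th*(y+w))" by (simp add: algebra_simps)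
          then have "sin (th*(-y)) = - sin (th*y)" "sin (th*(-y-w)) = - sin (th*(y+w))"
            by simp_all
          then show ?thesis unfolding F_def by (simp add: diff_divide_distrib right_diff_distrib)
        qed
      moreover have "(sin (th*(-y)) - sin (th*(-y-w))) / th \<ge> th * w^2 / 8"
        using trig_window[OF b _ _ w, of "-y"] y th False unfolding th_def[symmetric]
        by (simp add: field_simps power2_eq_square)
      ultimately show ?thesis using mult_left_mono[OF _ normal_density_nonneg, of "th * w^2 / 8" "(sin (th*(-y)) - sin (th*(-y-w))) / th" 0 1 w] by simp
    qed
    ultimately show ?thesis by (meson ennreal_leI order_trans)
  qed
  then show ?thesis using dens by simp
qed

lemma exp_cube_bound:
  fixes x :: real assumes "x \<ge> 0" shows "exp x - 1 \<ge> x^3/27"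
proof -
  have "1 + x/3 \<le> exp (x/3)" by (rule exp_ge_add_one_self)
  then have "(1 + x/3)^3 \<le> exp (x/3) ^ 3" by (rule power_mono) (use assms in auto)
  also have "exp (x/3) ^ 3 = exp x" by (simp add: exp_of_nat_mult[symmetric])
  finally have a: "(1 + x/3)^3 \<le> exp x" .
  have "(1 + x/3)^3 = 1 + x + x^2/3 + x^3/27" by (simp add: power3_eq_cube power2_eq_square field_simps)
  moreover have "x + x^2/3 \<ge> 0" using assms by simp
  ultimately show ?thesis using a by linarith
qed

lemma phi_ge: assumes "\<bar>w\<bar> \<le> 1" shows "std_normal_density w \<ge> 1/6"
proof -
  have "std_normal_density 1 \<le> std_normal_density w" by (rule std_normal_density_mono) (use assms in auto)
  moreover have "std_normal_density 1 \<ge> 1/6"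
  proof -
    have e: "exp (-(1/2)) \<ge> (1/2::real)" using exp_ge_add_one_self[of "-(1/2)"] by simp
    have "2 * pi \<le> 9" using pi_less_4 by simp
    then have "sqrt (2*pi) \<le> sqrt 9" by (rule real_sqrt_le_mono)
    then have sq: "sqrt (2*pi) \<le> 3" by simp
    have sp: "sqrt (2*pi) > 0" by simp
    have "1/6 \<le> (1/2) / sqrt (2*pi)" using sq sp by (simp add: field_simps)
    also have "\<dots> \<le> exp (-(1/2)) / sqrt (2*pi)" by (rule divide_right_mono[OF e]) simp
    finally show ?thesis by (simp add: std_normal_density_def)
  qed
  ultimately show ?thesis by linarith
qed

lemma real_ineq:
  fixes l b th c w :: real assumes l: "l > 0"
  assumes b_def: "b = 4 * sqrt l" and th_def: "th = pi/(2*b)" and c_def: "c = 4 powr (-1/l)" and w_def: "w = min 1 b"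
  shows "c > 0" "exp(-(th^2)/2) > c" "std_normal_density w * (th*w^2/8) > 0"
    "std_normal_density w * (th*w^2/8) * (exp(-(th^2)/2) - c) \<ge> c * (3/(16*b^4))"
proof -
  define sl where "sl = sqrt l"
  have sl: "sl > 0" using l by (simp add: sl_def)
  have ls: "l = sl^2" using l by (simp add: sl_def)
  have bs: "b = 4 * sl" by (simp add: b_def sl_def)
  have th: "th = pi/(8* sl)" by (simp add: th_def bs)
  have thpos: "th > 0" using sl by (simp add: th)
  have th3: "th \<ge> 3/(8* sl)" using pi_gt3 sl unfolding th by (simp add: divide_right_mono)
  show cpos: "c > 0" by (simp add: c_def)
  have ln4: "ln 4 \<ge> (1::real)"
  proof -
    have "exp 1 \<le> (4::real)" using e_less_272 by simp
    then have "ln (exp 1) \<le> ln (4::real)" by (subst ln_le_cancel_iff) auto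
    then show ?thesis by simp
  qed
  have c_le: "c \<le> exp (-1/l)"
  proof -
    have "c = exp (-1/l * ln 4)" by (simp add: c_def powr_def)
    moreover have "-1/l * ln 4 \<le> -1/l" using ln4 l by (simp add: field_simps)
    ultimately show ?thesis by simp
  qed
  have rho_ge: "exp(-(th^2)/2) \<ge> exp (-1/(8*l))"
  proof -
    have "pi^2 \<le> 4^2" using pi_less_4 pi_gt_zero by (intro power_mono) auto
    then have "th^2/2 \<le> 16/(128* sl^2)" unfolding th using sl by (simp add: power_divide field_simps)
    then have "th^2/2 \<le> 1/(8*l)" unfolding ls by simp
    then show ?thesis by simp
  qed
  have expsplit: "exp (-1/(8*l)) = exp (7/(8*l)) * exp (-1/l)"
    by (simp add: exp_add[symmetric] field_simps)
  have E1: "exp (7/(8*l)) - 1 \<ge> 7/(8*l)" using exp_ge_add_one_self[of "7/(8*l)"] by linarith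
  have E3: "exp (7/(8*l)) - 1 \<ge> (7/(8*l))^3/27" using l by (intro exp_cube_bound) simp
  define L where "L = std_normal_density w * (th*w^2/8)"
  have wpos: "w > 0" using sl by (simp add: w_def bs)
  have w1: "w \<le> 1" by (simp add: w_def)
  have phi: "std_normal_density w \<ge> 1/6" using wpos w1 by (intro phi_ge) simp
  show Lpos: "std_normal_density w * (th*w^2/8) > 0"
    using phi wpos thpos by simp
  have key: "L * (exp (7/(8*l)) - 1) \<ge> 3/(16*b^4)"
  proof (cases "sl \<ge> 1/4")
    case True
    then have w: "w = 1" by (simp add: w_def bs)
    have "L \<ge> (1/6) * (3/(8* sl)/8)" unfolding L_def w using phi[unfolded w] th3 sl
      by (intro mult_mono divide_right_mono) auto
    then have L: "L \<ge> 1/(128* sl)" by simp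
    have "L * (exp (7/(8*l)) - 1) \<ge> 1/(128* sl) * (7/(8* sl^2))"
      using L E1 sl Lpos[folded L_def] unfolding ls by (intro mult_mono) auto
    moreover have "1/(128* sl) * (7/(8* sl^2)) = 7/(1024* sl^3)" by (simp add: power2_eq_square power3_eq_cube)
    moreover have "3/(16*b^4) = 7/(1024* sl^3) * (3/(28* sl))" unfolding bs using sl
      by (simp add: field_simps power3_eq_cube power4_eq_xxxx)
    moreover have "7/(1024* sl^3) * (3/(28* sl)) \<le> 7/(1024* sl^3)"
      using True sl by (intro mult_left_le) (auto simp: field_simps)
    ultimately show ?thesis by linarith
  next
    case False
    then have w: "w = 4* sl" by (simp add: w_def bs)
    have "L \<ge> (1/6) * (3/(8* sl)*(4* sl)^2/8)" unfolding L_def w using phi[unfolded w] th3 sl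
      by (intro mult_mono divide_right_mono mult_right_mono) auto
    moreover have "(1/6) * (3/(8* sl)*(4* sl)^2/8) = sl/8" using sl by (simp add: field_simps power2_eq_square)
    ultimately have L: "L \<ge> sl/8" by simp
    have "L * (exp (7/(8*l)) - 1) \<ge> sl/8 * ((7/(8* sl^2))^3/27)"
      using L E3 sl Lpos[folded L_def] unfolding ls by (intro mult_mono) auto
    moreover have "sl/8 * ((7/(8* sl^2))^3/27) = 343/(110592* sl^5)" using sl
      by (simp add: field_simps power2_eq_square power3_eq_cube eval_nat_numeral)
    moreover have "3/(16*b^4) = 343/(110592* sl^5) * (81* sl/343)" unfolding bs using sl
      by (simp add: field_simps power4_eq_xxxx eval_nat_numeral)
    moreover have "343/(110592* sl^5) * (81* sl/343) \<le> 343/(110592* sl^5)"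
      using False sl by (intro mult_left_le) (auto simp: field_simps)
    ultimately show ?thesis by linarith
  qed
  have "L * (exp(-(th^2)/2) - c) \<ge> L * (exp (-1/(8*l)) - exp (-1/l))"
  proof -
    have "exp (-1/(8*l)) - exp (-1/l) \<le> exp(-(th^2)/2) - c" using rho_ge c_le by linarith
    then show ?thesis using Lpos unfolding L_def by (intro mult_left_mono) auto
  qed
  also have "L * (exp (-1/(8*l)) - exp (-1/l)) = (L * (exp (7/(8*l)) - 1)) * exp (-1/l)"
    unfolding expsplit by (simp add: algebra_simps)
  also have "\<dots> \<ge> 3/(16*b^4) * exp (-1/l)" using key by (intro mult_right_mono) auto
  also have "3/(16*b^4) * exp (-1/l) \<ge> 3/(16*b^4) * c" using c_le sl bs by (intro mult_left_mono) auto
  finally show "std_normal_density w * (th*w^2/8) * (exp(-(th^2)/2) - c) \<ge> c * (3/(16*b^4))"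
    unfolding L_def by (simp add: mult.commute)
  have "exp (-1/(8*l)) > exp (-1/l)" using l by (simp add: field_simps)
  then show "exp(-(th^2)/2) > c" using rho_ge c_le by linarith
qed

lemma step:
  fixes l a th c y :: real
  assumes l: "l > 0" and a_def: "a = 4 * sqrt l" and th_def: "th = pi/(2*a)" and c_def: "c = 4 powr (-1/l)"
  shows "(\<integral>\<^sup>+t. ennreal (if \<bar>y+t\<bar> < a then cos (th * (y+t)) else 0) \<partial>std_normal_distribution)
         \<ge> ennreal c * ennreal (if \<bar>y\<bar> < a then cos (th * y) else 0)"
proof (cases "\<bar>y\<bar> < a")
  case False
  then show ?thesis by simp
next
  case True
  have a: "a > 0" using l by (simp add: a_def)
  define w where "w = min 1 a"
  define L where "L = std_normal_density w * (th*w^2/8)"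
  define \<rho> where "\<rho> = exp(-(th^2)/2)"
  define \<tau> where "\<tau> = 3/(16*a^4)"
  note R = real_ineq[OF l a_def th_def c_def w_def, folded L_def \<rho>_def \<tau>_def]
  let ?f = "\<lambda>t. if \<bar>y+t\<bar> < a then cos (th * (y+t)) else 0"
  define I where "I = (\<integral>t. ?f t \<partial>std_normal_distribution)"
  note g1 = G1[OF a True, folded th_def]
  have cosnn: "cos (th * z) \<ge> 0" if "\<bar>z\<bar> \<le> a" for z
  proof (rule cos_ge_zero)
    have thp: "th > 0" using a by (simp add: th_def)
    have thb: "th * a = pi/2" using a by (simp add: th_def)
    have "\<bar>th * z\<bar> \<le> th * a" using that thp by (simp add: abs_mult mult_left_mono)
    then show "- (pi/2) \<le> th * z" "th * z \<le> pi/2" using thb by (simp_all add: abs_le_iff)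
  qed
  have fnn: "?f t \<ge> 0" for t using cosnn[of "y+t"] by auto
  have nnI: "(\<integral>\<^sup>+t. ennreal (?f t) \<partial>std_normal_distribution) = ennreal I"
    unfolding I_def using g1(1) fnn by (intro nn_integral_eq_integral) auto
  have I0: "I \<ge> 0" unfolding I_def using fnn by (intro integral_nonneg_AE) auto
  have IL: "I \<ge> L"
  proof -
    have "ennreal L \<le> ennreal I"
      using G2[OF a True, of w, folded th_def] a unfolding nnI L_def w_def by auto
    then show ?thesis using I0 by (simp add: ennreal_le_iff)
  qed
  have Irho: "I \<ge> \<rho> * cos (th*y) - \<tau>" using g1(2) unfolding I_def \<rho>_def \<tau>_def .
  have C: "cos (th*y) \<ge> 0" using cosnn[of y] True by simp
  have main: "I \<ge> c * cos (th*y)"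
  proof (cases "c * cos (th*y) \<le> L")
    case True
    then show ?thesis using IL by linarith
  next
    case False
    have "(\<rho> - c) * (c * cos (th*y)) \<ge> (\<rho> - c) * L"
      using False R(2) by (intro mult_left_mono) auto
    then have "c * ((\<rho> - c) * cos (th*y)) \<ge> c * \<tau>" using R(4) by (simp add: algebra_simps)
    then have "(\<rho> - c) * cos (th*y) \<ge> \<tau>" using R(1) by simp
    then show ?thesis using Irho by (simp add: algebra_simps)
  qed
  have "ennreal c * ennreal (cos (th * y)) = ennreal (c * cos (th*y))"
    using R(1) C by (simp add: ennreal_mult)
  also have "\<dots> \<le> ennreal I" using main by (rule ennreal_leI)
  finally show ?thesis using True nnI by simp
qed

definition stayf :: "real \<Rightarrow> (real \<Rightarrow> real) \<Rightarrow> nat \<Rightarrow> (nat \<Rightarrow> real) \<Rightarrow> real" where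
  "stayf a g n x = (if (\<forall>k\<in>{1..n}. \<bar>\<Sum>i=1..k. x i\<bar> < a) then g (\<Sum>i=1..n. x i) else 0)"

lemma stayf_meas_borel:
  assumes gm[measurable]: "g \<in> borel_measurable borel" and nI: "{1..n} \<subseteq> I"
  shows "(\<lambda>x. stayf a g n x) \<in> borel_measurable (PiM I (\<lambda>_. borel))"
proof -
  have sm: "(\<lambda>x::nat\<Rightarrow>real. \<Sum>i=1..k. x i) \<in> borel_measurable (PiM I (\<lambda>_. borel))" if "k \<le> n" for k
  proof -
    have h: "(\<lambda>x. x i) \<in> borel_measurable (PiM I (\<lambda>_. borel))" if "i \<in> {1..k}" for i
    proof -
      have "i \<in> I" using nI that \<open>k \<le> n\<close> by auto
      then show ?thesis by (rule measurable_component_singleton)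
    qed
    show ?thesis using borel_measurable_sum[where f="\<lambda>i (x::nat\<Rightarrow>real). x i" and S="{1..k}", OF h] by blast
  qed
  have p: "Measurable.pred (PiM I (\<lambda>_. borel)) (\<lambda>x. \<forall>k\<in>{1..n}. \<bar>\<Sum>i=1..k. x i\<bar> < a)"
  proof (rule pred_intros_finite(3))
    fix k assume "k \<in> {1..n}"
    then have [measurable]: "(\<lambda>x::nat\<Rightarrow>real. \<Sum>i=1..k. x i) \<in> borel_measurable (PiM I (\<lambda>_. borel))"
      using sm by auto
    show "Measurable.pred (PiM I (\<lambda>_. borel)) (\<lambda>x. \<bar>\<Sum>i=1..k. x i\<bar> < a)" by measurable
  qed simp
  have [measurable]: "(\<lambda>x::nat\<Rightarrow>real. \<Sum>i=1..n. x i) \<in> borel_measurable (PiM I (\<lambda>_. borel))" using sm by auto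
  note p[measurable]
  show ?thesis unfolding stayf_def by measurable
qed

lemma sets_PiM_N: "sets (PiM I (\<lambda>_. std_normal_distribution)) = sets (PiM I (\<lambda>_. borel))"
  by (intro sets_PiM_cong) auto

lemma stayf_meas:
  assumes "g \<in> borel_measurable borel" and "{1..n} \<subseteq> I"
  shows "(\<lambda>x. stayf a g n x) \<in> borel_measurable (PiM I (\<lambda>_. std_normal_distribution))"
  using stayf_meas_borel[OF assms] by (simp add: measurable_cong_sets[OF sets_PiM_N refl])

lemma stayf_upd:
  "stayf a g (Suc n) (x(Suc n := y)) =
     (if (\<forall>k\<in>{1..n}. \<bar>\<Sum>i=1..k. x i\<bar> < a) \<and> \<bar>(\<Sum>i=1..n. x i) + y\<bar> < a then g ((\<Sum>i=1..n. x i) + y) else 0)"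
proof -
  have s1: "(\<Sum>i=1..k. (x(Suc n := y)) i) = (\<Sum>i=1..k. x i)" if "k \<le> n" for k
    using that by (intro sum.cong) auto
  have s2: "(\<Sum>i=1..Suc n. (x(Suc n := y)) i) = (\<Sum>i=1..n. x i) + y"
    using s1[of n] by simp
  have b: "(\<forall>k\<in>{1..Suc n}. \<bar>\<Sum>i=1..k. (x(Suc n := y)) i\<bar> < a) \<longleftrightarrow>
        (\<forall>k\<in>{1..n}. \<bar>\<Sum>i=1..k. x i\<bar> < a) \<and> \<bar>(\<Sum>i=1..n. x i) + y\<bar> < a"
  proof -
    have "{1..Suc n} = insert (Suc n) {1..n}" by auto
    then show ?thesis using s1 s2 by auto
  qed
  show ?thesis unfolding stayf_def b s2 by simp
qed

lemma prod_bound: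
  fixes g :: "real \<Rightarrow> real" and a c :: real
  assumes gm[measurable]: "g \<in> borel_measurable borel" and gnn: "\<And>z. g z \<ge> 0"
    and gsupp: "\<And>z. \<not> \<bar>z\<bar> < a \<Longrightarrow> g z = 0"
    and stp: "\<And>y. ennreal c * ennreal (g y) \<le> (\<integral>\<^sup>+t. ennreal (g (y+t)) \<partial>std_normal_distribution)"
  shows "ennreal c ^ n * ennreal (g 0) \<le> (\<integral>\<^sup>+x. ennreal (stayf a g n x) \<partial>PiM {1..n} (\<lambda>_. std_normal_distribution))"
proof (induction n)
  case 0
  have "stayf a g 0 (\<lambda>_. undefined) = g 0" by (simp add: stayf_def)
  then show ?case by (simp add: PiM_empty nn_integral_count_space_finite)
next
  case (Suc n)
  interpret product_sigma_finite "\<lambda>_::nat. std_normal_distribution"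
    by (simp add: product_sigma_finite_def prob_space_imp_sigma_finite prob_space_normal_density)
  have ins: "{1..Suc n} = insert (Suc n) {1..n}" by auto
  have meas: "(\<lambda>x. ennreal (stayf a g (Suc n) x)) \<in> borel_measurable (PiM (insert (Suc n) {1..n}) (\<lambda>_. std_normal_distribution))"
  proof -
    have "{1..Suc n} \<subseteq> insert (Suc n) {1..n}" by auto
    from stayf_meas[OF gm this, where a=a] show ?thesis by measurable
  qed
  have measn: "(\<lambda>x. ennreal (stayf a g n x)) \<in> borel_measurable (PiM {1..n} (\<lambda>_. std_normal_distribution))"
    using stayf_meas[OF gm, where n=n and I="{1..n}" and a=a] by measurable
  have inner: "ennreal c * ennreal (stayf a g n x) \<le> (\<integral>\<^sup>+y. ennreal (stayf a g (Suc n) (x(Suc n := y))) \<partial>std_normal_distribution)" for x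
  proof (cases "\<forall>k\<in>{1..n}. \<bar>\<Sum>i=1..k. x i\<bar> < a")
    case True
    have "(\<integral>\<^sup>+y. ennreal (stayf a g (Suc n) (x(Suc n := y))) \<partial>std_normal_distribution)
        = (\<integral>\<^sup>+y. ennreal (g ((\<Sum>i=1..n. x i) + y)) \<partial>std_normal_distribution)"
      unfolding stayf_upd using True gsupp by (intro nn_integral_cong) auto
    moreover have "stayf a g n x = g (\<Sum>i=1..n. x i)" using True by (simp add: stayf_def)
    ultimately show ?thesis using stp by simp
  next
    case False
    then have "stayf a g n x = 0" unfolding stayf_def by meson
    then show ?thesis by simp
  qed
  have eq1: "(\<integral>\<^sup>+x. ennreal (stayf a g (Suc n) x) \<partial>PiM {1..Suc n} (\<lambda>_. std_normal_distribution))
      = (\<integral>\<^sup>+x. (\<integral>\<^sup>+y. ennreal (stayf a g (Suc n) (x(Suc n := y))) \<partial>std_normal_distribution) \<partial>PiM {1..n} (\<lambda>_. std_normal_distribution))"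
    unfolding ins by (rule product_nn_integral_insert[OF _ _ meas]) auto
  have le1: "(\<integral>\<^sup>+x. ennreal c * ennreal (stayf a g n x) \<partial>PiM {1..n} (\<lambda>_. std_normal_distribution))
     \<le> (\<integral>\<^sup>+x. (\<integral>\<^sup>+y. ennreal (stayf a g (Suc n) (x(Suc n := y))) \<partial>std_normal_distribution) \<partial>PiM {1..n} (\<lambda>_. std_normal_distribution))"
    using inner by (intro nn_integral_mono) auto
  have eq2: "(\<integral>\<^sup>+x. ennreal c * ennreal (stayf a g n x) \<partial>PiM {1..n} (\<lambda>_. std_normal_distribution))
      = ennreal c * (\<integral>\<^sup>+x. ennreal (stayf a g n x) \<partial>PiM {1..n} (\<lambda>_. std_normal_distribution))"
    using measn by (rule nn_integral_cmult)
  have le2: "ennreal c * (ennreal c ^ n * ennreal (g 0)) \<le> ennreal c * (\<integral>\<^sup>+x. ennreal (stayf a g n x) \<partial>PiM {1..n} (\<lambda>_. std_normal_distribution))"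
    using Suc.IH by (intro mult_left_mono) auto
  have "ennreal c ^ Suc n * ennreal (g 0) = ennreal c * (ennreal c ^ n * ennreal (g 0))"
    by (simp add: mult.assoc)
  also note le2
  also note eq2[symmetric]
  also note le1
  also note eq1[symmetric]
  finally show ?case .
qed

theorem lemma4p5:
  fixes M :: "'a measure" and X :: "nat \<Rightarrow> 'a \<Rightarrow> real" and n :: nat and l :: real
  assumes "prob_space M"
    and "prob_space.indep_vars M (\<lambda>_. borel) X {1..n}"
    and "\<And>i. i \<in> {1..n} \<Longrightarrow> distributed M lborel (X i) std_normal_density"
    and "l > 0"
  shows "measure M {\<omega> \<in> space M. (\<forall>k\<in>{1..n}. \<bar>\<Sum>i=1..k. X i \<omega>\<bar> < 4 * sqrt l)}
           \<ge> 4 powr (- real n / l)"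
proof -
  interpret prob_space M by (rule assms(1))
  note indep = assms(2) and distX = assms(3) and l = assms(4)
  define a where "a = 4 * sqrt l"
  define th where "th = pi/(2*a)"
  define c where "c = 4 powr (-1/l)"
  define g where "g = (\<lambda>z. if \<bar>z\<bar> < a then cos (th * z) else 0)"
  let ?N = "std_normal_distribution"
  let ?P = "PiM {1..n} (\<lambda>_. ?N)"
  let ?B = "PiM {1..n} (\<lambda>_. borel :: real measure)"
  have apos: "a > 0" using l by (simp add: a_def)
  have cpos: "c > 0" by (simp add: c_def)
  have cn: "c ^ n = 4 powr (- real n / l)"
    unfolding c_def by (simp add: powr_power)
  show ?thesis
  proof (cases "n = 0")
    case True
    then show ?thesis using prob_space by simp
  next
    case False
    have rv: "random_variable borel (X i)" if "i \<in> {1..n}" for i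
      using distX[OF that] unfolding distributed_def by (simp add: measurable_lborel1)
    have dX: "distr M borel (X i) = ?N" if "i \<in> {1..n}" for i
    proof -
      have "distr M borel (X i) = distr M lborel (X i)" by (rule distr_cong) auto
      then show ?thesis using distX[OF that] unfolding distributed_def by simp
    qed
    define Y where "Y = (\<lambda>\<omega>. \<lambda>i\<in>{1..n}. X i \<omega>)"
    have Ym: "Y \<in> measurable M ?B"
      unfolding Y_def using rv by (intro measurable_restrict) auto
    have "distr M ?B Y = PiM {1..n} (\<lambda>i. distr M borel (X i))"
      unfolding Y_def using indep_vars_iff_distr_eq_PiM'[where I="{1..n}" and M'="\<lambda>_. borel" and X=X] False rv indep by auto
    also have "\<dots> = ?P" using dX by (intro PiM_cong) auto
    finally have dY: "distr M ?B Y = ?P" .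
    define A where "A = {x \<in> space ?B. \<forall>k\<in>{1..n}. \<bar>\<Sum>i=1..k. x i\<bar> < a}"
    have sm: "(\<lambda>x::nat\<Rightarrow>real. \<Sum>i=1..k. x i) \<in> borel_measurable ?B" if "k \<le> n" for k
    proof -
      have h: "(\<lambda>x. x i) \<in> borel_measurable ?B" if "i \<in> {1..k}" for i
      proof -
        have "i \<in> {1..n}" using that \<open>k \<le> n\<close> by auto
        then show ?thesis by (rule measurable_component_singleton)
      qed
      show ?thesis using borel_measurable_sum[where f="\<lambda>i (x::nat\<Rightarrow>real). x i" and S="{1..k}", OF h] by blast
    qed
    have p: "Measurable.pred ?B (\<lambda>x. \<forall>k\<in>{1..n}. \<bar>\<Sum>i=1..k. x i\<bar> < a)"
    proof (rule pred_intros_finite(3))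
      fix k assume "k \<in> {1..n}"
      then have [measurable]: "(\<lambda>x::nat\<Rightarrow>real. \<Sum>i=1..k. x i) \<in> borel_measurable ?B"
        using sm by auto
      show "Measurable.pred ?B (\<lambda>x. \<bar>\<Sum>i=1..k. x i\<bar> < a)" by measurable
    qed simp
    have Asets: "A \<in> sets ?B" unfolding A_def using p by (simp add: pred_def)
    have spB: "space ?B = space ?P" by (rule sets_eq_imp_space_eq[OF sets_PiM_N[symmetric]])
    have AsetsP: "A \<in> sets ?P" using Asets sets_PiM_N by auto
    have pre: "{\<omega> \<in> space M. (\<forall>k\<in>{1..n}. \<bar>\<Sum>i=1..k. X i \<omega>\<bar> < 4 * sqrt l)} = Y -` A \<inter> space M"
    proof -
      have "(\<Sum>i=1..k. Y \<omega> i) = (\<Sum>i=1..k. X i \<omega>)" if "k \<in> {1..n}" for k \<omega>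
        using that unfolding Y_def by (intro sum.cong) auto
      moreover have "Y \<omega> \<in> space ?B" if "\<omega> \<in> space M" for \<omega>
        using Ym that by (rule measurable_space)
      ultimately show ?thesis unfolding A_def a_def by auto
    qed
    have meq: "measure M {\<omega> \<in> space M. (\<forall>k\<in>{1..n}. \<bar>\<Sum>i=1..k. X i \<omega>\<bar> < 4 * sqrt l)} = measure ?P A"
      unfolding pre using measure_distr[OF Ym Asets] dY by simp
    interpret P: prob_space ?P by (intro prob_space_PiM prob_space_normal_density) simp
    have gm: "g \<in> borel_measurable borel" unfolding g_def by measurable
    have gnn: "g z \<ge> 0" for z
    proof (cases "\<bar>z\<bar> < a")
      case True
      show ?thesis unfolding g_def using True
      proof (simp, intro cos_ge_zero)
        have thp: "th > 0" using apos by (simp add: th_def)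
        have thb: "th * a = pi/2" using apos by (simp add: th_def)
        have "\<bar>th * z\<bar> \<le> th * a" using True thp by (simp add: abs_mult mult_left_mono)
        then show "- (pi/2) \<le> th * z" "th * z \<le> pi/2" using thb by (simp_all add: abs_le_iff)
      qed
    qed (simp add: g_def)
    have gle: "g z \<le> 1" for z by (simp add: g_def)
    have gsupp: "\<not> \<bar>z\<bar> < a \<Longrightarrow> g z = 0" for z by (simp add: g_def)
    have stp: "ennreal c * ennreal (g y) \<le> (\<integral>\<^sup>+t. ennreal (g (y+t)) \<partial>?N)" for y
      unfolding g_def using step[OF l a_def th_def c_def, of y] .
    have g0: "g 0 = 1" using apos by (simp add: g_def)
    have "ennreal (c ^ n) = ennreal c ^ n * ennreal (g 0)" using cpos g0 by (simp add: ennreal_power)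
    also have "\<dots> \<le> (\<integral>\<^sup>+x. ennreal (stayf a g n x) \<partial>?P)"
      by (rule prod_bound[OF gm gnn gsupp stp])
    also have "\<dots> \<le> (\<integral>\<^sup>+x. indicator A x \<partial>?P)"
    proof (rule nn_integral_mono)
      fix x assume x: "x \<in> space ?P"
      show "ennreal (stayf a g n x) \<le> indicator A x"
      proof (cases "\<forall>k\<in>{1..n}. \<bar>\<Sum>i=1..k. x i\<bar> < a")
        case True
        then have "x \<in> A" using x spB unfolding A_def by auto
        then show ?thesis using True gle by (simp add: stayf_def)
      next
        case False
        then have "stayf a g n x = 0" unfolding stayf_def by meson
        then show ?thesis by simp
      qed
    qed
    also have "\<dots> = emeasure ?P A" using AsetsP by simp
    also have "\<dots> = ennreal (measure ?P A)" by (rule P.emeasure_eq_measure)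
    finally have "c ^ n \<le> measure ?P A" using cpos by (simp add: ennreal_le_iff)
    then show ?thesis unfolding meq cn .
  qed
qed


end
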